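(* Let $(\beta(n))_{n\in\mathbb{N}}$ be a non-increasing sequence of positive real numbers converging to $0$. Let $\tau_v(f)=\sum_{n=1}^\infty 2^{-n}f(1/2^{n-1})$ on $C(\overline{\mathbb{N}})$, let $E_m:C(\overline{\mathbb{N}})\to\mathcal{C}_m$ be the unique $\tau_v$-preserving conditional expectation onto $\mathcal{C}_m$, and define $L_\beta(f)=\sup\{\|f-E_m(f)\|_\infty/\beta(m): m\in\mathbb{N}\}$. Then $L_\beta(\varphi_n)=1/\beta(n)$ for all $n\in\mathbb{N}$.
   Context: $\mathbb{N}=\{1,2,\dots\}$, $\overline{\mathbb{N}}=\{1/2^{n-1}: n\in\mathbb{N}\}\cup\{0\}\subseteq\mathbb{R}$, and $\|\cdot\|_\infty$ is the sup norm on $C(\overline{\mathbb{N}})$. For $m\in\mathbb{N}$, $\mathcal{C}_m=\{f\in C(\overline{\mathbb{N}}): f(x)=f(1/2^{m-1})\text{ for all } x\le 1/2^{m-1}\}$, a finite-dimensional C*-subalgebra with $\mathcal{C}_1=\mathbb{C}1$; the $\mathcal{C}_m$ increase and their union is dense. A conditional expectation onto a unital C*-subalgebra $B$ is a linear map $E$ onto $B$ with $E|_B=\mathrm{id}$, $\|E(a)\|\le\|a\|$ and $E(bab')=bE(a)b'$ for $b,b'\in B$; $\tau_v$-preserving means $\tau_v\circ E=\tau_v$. For $n\in\mathbb{N}_0$, $\varphi_n:\overline{\mathbb{N}}\to\mathbb{R}$ is defined by $\varphi_n(x)=0$ if $x>1/2^{n-1}$, $\varphi_n(x)=-1$ if $x=1/2^{n-1}$,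 and $\varphi_n(x)=1$ if $x<1/2^{n-1}$. *)

theory Defs
  imports "HOL-Analysis.Analysis" "HOL-Library.FuncSet"
begin

definition Nbar :: "real set" where
  "Nbar = insert 0 ((\<lambda>k::nat. (1/2::real) ^ k) ` UNIV)"

text \<open>C(Nbar): complex continuous functions on Nbar, normalised to be 0 outside Nbar
  (so that each element of C(Nbar) has exactly one representative).\<close>
definition CN :: "(real \<Rightarrow> complex) set" where
  "CN = {f. continuous_on Nbar f \<and> (\<forall>x. x \<notin> Nbar \<longrightarrow> f x = 0)}"

definition supnorm :: "(real \<Rightarrow> complex) \<Rightarrow> real" where
  "supnorm f = (SUP x\<in>Nbar. cmod (f x))"

definition pt :: "nat \<Rightarrow> real" where
  "pt m = 2 powr (1 - real m)"

definition Cm :: "nat \<Rightarrow> (real \<Rightarrow> complex) set" where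
  "Cm m = {f \<in> CN. \<forall>x\<in>Nbar. x \<le> pt m \<longrightarrow> f x = f (pt m)}"

definition tau_v :: "(real \<Rightarrow> complex) \<Rightarrow> complex" where
  "tau_v f = (\<Sum>n. complex_of_real ((1/2) ^ (Suc n)) * f (pt (Suc n)))"

definition cond_exp :: "(real \<Rightarrow> complex) set \<Rightarrow> ((real \<Rightarrow> complex) \<Rightarrow> (real \<Rightarrow> complex)) \<Rightarrow> bool" where
  "cond_exp B E \<longleftrightarrow>
     E ` CN = B \<and>
     (\<forall>f\<in>CN. \<forall>g\<in>CN. E (\<lambda>x. f x + g x) = (\<lambda>x. E f x + E g x)) \<and>
     (\<forall>f\<in>CN. \<forall>c. E (\<lambda>x. c * f x) = (\<lambda>x. c * E f x)) \<and>
     (\<forall>b\<in>B. E b = b) \<and>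
     (\<forall>a\<in>CN. supnorm (E a) \<le> supnorm a) \<and>
     (\<forall>b\<in>B. \<forall>b'\<in>B. \<forall>a\<in>CN. E (\<lambda>x. b x * a x * b' x) = (\<lambda>x. b x * E a x * b' x))"

definition tau_preserving :: "((real \<Rightarrow> complex) \<Rightarrow> (real \<Rightarrow> complex)) \<Rightarrow> bool" where
  "tau_preserving E \<longleftrightarrow> (\<forall>f\<in>CN. tau_v (E f) = tau_v f)"

text \<open>E_m: the unique tau_v-preserving conditional expectation onto C_m
  (as a map on C(Nbar), i.e. an extensional function on CN).\<close>
definition Em :: "nat \<Rightarrow> (real \<Rightarrow> complex) \<Rightarrow> (real \<Rightarrow> complex)" where
  "Em m = (THE E. E \<in> CN \<rightarrow>\<^sub>E Cm m \<and> cond_exp (Cm m) E \<and> tau_preserving E)"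

definition L_beta :: "(nat \<Rightarrow> real) \<Rightarrow> (real \<Rightarrow> complex) \<Rightarrow> real" where
  "L_beta \<beta> f = (SUP m\<in>{1..}. supnorm (\<lambda>x. f x - Em m f x) / \<beta> m)"

definition phi :: "nat \<Rightarrow> real \<Rightarrow> complex" where
  "phi n x = (if x \<notin> Nbar then 0
              else if x > pt n then 0
              else if x = pt n then -1 else 1)"

end

theory Submission imports Defs begin

definition q :: "nat \<Rightarrow> real" where "q j = (1/2) ^ j"

lemma Nbar_q: "Nbar = insert 0 (range q)"
  by (simp add: Nbar_def q_def[abs_def])

lemma q_pos: "q j > 0" by (simp add: q_def)

lemma q_le_iff: "q i \<le> q j \<longleftrightarrow> j \<le> i"
  by (simp add: q_def power_decreasing_iff)

lemma q_less_iff: "q i < q j \<longleftrightarrow> j < i"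
  by (simp add: q_def power_strict_decreasing_iff)

lemma q_eq_iff: "q i = q j \<longleftrightarrow> i = j"
  by (metis q_le_iff order_antisym order_refl)

lemma q_in: "q j \<in> Nbar" by (simp add: Nbar_q)

lemma zero_in: "0 \<in> Nbar" by (simp add: Nbar_q)

lemma pt_q: "m \<ge> 1 \<Longrightarrow> pt m = q (m - 1)"
proof -
  assume "m \<ge> 1"
  then have e: "1 - real m = - real (m - 1)" by (simp add: of_nat_diff)
  have "pt m = 2 powr (- real (m - 1))" unfolding pt_def e ..
  also have "\<dots> = inverse (2 powr real (m - 1))" by (rule powr_minus)
  also have "\<dots> = inverse (2 ^ (m - 1))" by (simp add: powr_realpow)
  also have "\<dots> = q (m - 1)" by (simp add: q_def power_divide inverse_eq_divide)
  finally show ?thesis .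
qed

lemma pt_Suc: "pt (Suc n) = q n" using pt_q[of "Suc n"] by simp

lemma compact_Nbar: "compact Nbar"
proof -
  have "q \<longlonglongrightarrow> 0" unfolding q_def[abs_def] by (rule LIMSEQ_realpow_zero) auto
  then show ?thesis unfolding Nbar_q by (rule compact_sequence_with_limit)
qed

lemma closed_Nbar: "closed Nbar" using compact_Nbar compact_imp_closed by blast

lemma Nbar_cases: "x \<in> Nbar \<Longrightarrow> (x = 0 \<Longrightarrow> P) \<Longrightarrow> (\<And>j. x = q j \<Longrightarrow> P) \<Longrightarrow> P"
  unfolding Nbar_q by auto

lemma Nbar_gt: "x \<in> Nbar \<Longrightarrow> x > q K \<Longrightarrow> \<exists>j<K. x = q j"
proof (erule Nbar_cases)
  assume "x > q K" "x = 0" then show ?thesis using q_pos[of K] by simp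
next
  fix j assume "x > q K" "x = q j" then show ?thesis by (auto simp: q_less_iff)
qed

lemma cont_lemma:
  assumes "\<forall>x\<in>Nbar. x \<le> q K \<longrightarrow> g x = g (q K)"
  shows "continuous_on Nbar g"
proof -
  let ?A = "Nbar \<inter> {..q K}" and ?B = "Nbar \<inter> {q K <..}"
  have fin: "?B \<subseteq> q ` {..<K}" using Nbar_gt by blast
  have B_eq: "?B = Nbar \<inter> {2 * q K ..}"
  proof safe
    fix x assume "x \<in> Nbar" "q K < x"
    then obtain j where j: "j < K" "x = q j" using Nbar_gt by blast
    then have "q j \<ge> q (K - 1)" by (simp add: q_le_iff)
    moreover have "q (K - 1) = 2 * q K" using j(1) unfolding q_def
      by (cases K) auto
    ultimately show "2 * q K \<le> x" using j by simp
  next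
    fix x assume "x \<in> Nbar" "2 * q K \<le> x" then show "q K < x" using q_pos[of K] by simp
  qed
  have "continuous_on (?A \<union> ?B) g"
  proof (rule continuous_on_closed_Un)
    show "closed ?A" by (intro closed_Int closed_Nbar closed_atMost)
    show "closed ?B" unfolding B_eq by (intro closed_Int closed_Nbar closed_atLeast)
    show "continuous_on ?A g"
    proof (rule continuous_on_eq[OF continuous_on_const])
      fix x assume "x \<in> ?A"
      then have "x \<in> Nbar" "x \<le> q K" by auto
      then show "g (q K) = g x" using assms by metis
    qed
    have "finite ?B" by (rule finite_subset[OF fin]) simp
    then show "continuous_on ?B g" by (rule continuous_on_finite)
  qed
  moreover have "?A \<union> ?B = Nbar" by auto
  ultimately show ?thesis by simp
qed

lemma CN_bdd: "f \<in> CN \<Longrightarrow> bdd_above ((\<lambda>x. cmod (f x)) ` Nbar)"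
proof -
  assume "f \<in> CN"
  then have "continuous_on Nbar f" unfolding CN_def by blast
  then have "continuous_on Nbar (\<lambda>x. cmod (f x))" by (rule continuous_on_norm)
  then have "compact ((\<lambda>x. cmod (f x)) ` Nbar)" using compact_Nbar compact_continuous_image by blast
  then show ?thesis by (intro bounded_imp_bdd_above compact_imp_bounded)
qed

lemma le_supnorm: "f \<in> CN \<Longrightarrow> x \<in> Nbar \<Longrightarrow> cmod (f x) \<le> supnorm f"
  unfolding supnorm_def by (rule cSUP_upper) (auto simp: CN_bdd)

lemma supnorm_nonneg: "f \<in> CN \<Longrightarrow> 0 \<le> supnorm f"
proof -
  assume "f \<in> CN"
  then have "cmod (f 0) \<le> supnorm f" by (rule le_supnorm[OF _ zero_in])
  then show ?thesis using norm_ge_zero[of "f 0"] by linarith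
qed

definition w :: "nat \<Rightarrow> complex" where "w i = complex_of_real ((1/2) ^ Suc i)"

lemma norm_w: "norm (w i) = (1/2) ^ Suc i"
  unfolding w_def norm_of_real by simp

lemma w_sums: "w sums 1"
proof -
  have "(\<lambda>n. complex_of_real ((1/2)^Suc n)) sums complex_of_real 1" by (rule sums_of_real[OF power_half_series])
  then show ?thesis unfolding w_def[abs_def] by (simp only: of_real_1)
qed

lemma w_const: "(\<Sum>i. w i * c) = c"
  using sums_unique[OF sums_mult2[OF w_sums, of c]] by simp

lemma half_summable: "summable (\<lambda>i. (1/2::real) ^ Suc i * S)"
  using power_half_series summable_def summable_mult2 by blast

lemma half_sum: "(\<Sum>i. (1/2::real) ^ Suc i * S) = S"
  using sums_unique[OF sums_mult2[OF power_half_series, of S]] by simp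

lemma w_summable:
  assumes "\<And>i. cmod (g i) \<le> S"
  shows "summable (\<lambda>i. w i * g i)"
proof (rule summable_comparison_test[OF _ half_summable[of S]])
  show "\<exists>N. \<forall>n\<ge>N. norm (w n * g n) \<le> (1/2) ^ Suc n * S"
    using assms by (auto simp: norm_mult norm_w intro!: mult_left_mono)
qed

lemma w_norm_le:
  assumes "\<And>i. cmod (g i) \<le> S"
  shows "cmod (\<Sum>i. w i * g i) \<le> S"
proof -
  have b: "\<And>n. norm (norm (w n * g n)) \<le> (1/2) ^ Suc n * S"
    using assms by (auto simp: norm_mult norm_w intro!: mult_left_mono)
  have sn: "summable (\<lambda>n. norm (w n * g n))"
    by (rule summable_comparison_test[OF _ half_summable[of S]]) (use b in auto)
  have "cmod (\<Sum>i. w i * g i) \<le> (\<Sum>n. norm (w n * g n))" by (rule summable_norm[OF sn])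
  also have "\<dots> \<le> (\<Sum>n. (1/2) ^ Suc n * S)"
    by (rule suminf_le[OF _ sn half_summable]) (use b in auto)
  also have "\<dots> = S" by (rule half_sum)
  finally show ?thesis .
qed

definition tlm :: "nat \<Rightarrow> (real \<Rightarrow> complex) \<Rightarrow> complex" where
  "tlm M f = (\<Sum>i. w i * f (q (M + i)))"

lemma tau_alt: "tau_v g = (\<Sum>n. w n * g (q n))"
  unfolding tau_v_def w_def pt_Suc by simp

lemma tau_split:
  assumes "\<And>j. cmod (g (q j)) \<le> S"
  shows "tau_v g = (\<Sum>j<M. w j * g (q j)) + complex_of_real ((1/2)^M) * tlm M g"
proof -
  have sm: "summable (\<lambda>n. w n * g (q n))" by (rule w_summable) (use assms in auto)
  have sm2: "summable (\<lambda>i. w i * g (q (M + i)))" by (rule w_summable) (use assms in auto)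
  have "tau_v g = (\<Sum>n. w (n + M) * g (q (n + M))) + (\<Sum>j<M. w j * g (q j))"
    unfolding tau_alt by (rule suminf_split_initial_segment[OF sm])
  also have "(\<Sum>n. w (n + M) * g (q (n + M))) = (\<Sum>n. complex_of_real ((1/2)^M) * (w n * g (q (M + n))))"
  proof -
    have "w (n + M) * g (q (n + M)) = complex_of_real ((1/2)^M) * (w n * g (q (M + n)))" for n
    proof -
      have "w (n + M) = complex_of_real ((1/2)^M) * w n" unfolding w_def
        by (simp only: add_Suc[symmetric] power_add of_real_mult mult.commute)
      moreover have "M + n = n + M" by simp
      ultimately show ?thesis by (simp only: mult.assoc)
    qed
    then show ?thesis by (simp only:)
  qed
  also have "\<dots> = complex_of_real ((1/2)^M) * tlm M g"
    unfolding tlm_def by (rule suminf_mult[OF sm2])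
  finally show ?thesis by simp
qed

definition CmM :: "nat \<Rightarrow> (real \<Rightarrow> complex) set" where
  "CmM M = {g. (\<forall>x. x \<notin> Nbar \<longrightarrow> g x = 0) \<and> (\<forall>x\<in>Nbar. x \<le> q M \<longrightarrow> g x = g (q M))}"

lemma CmM_CN: "CmM M \<subseteq> CN"
proof
  fix g assume g: "g \<in> CmM M"
  then have "continuous_on Nbar g" by (intro cont_lemma[of M]) (simp add: CmM_def)
  moreover have "\<forall>x. x \<notin> Nbar \<longrightarrow> g x = 0" using g unfolding CmM_def by blast
  ultimately show "g \<in> CN" unfolding CN_def by blast
qed

lemma Cm_eq: "m \<ge> 1 \<Longrightarrow> Cm m = CmM (m - 1)"
proof -
  assume m: "m \<ge> 1"
  show ?thesis unfolding Cm_def pt_q[OF m]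
  proof (intro set_eqI iffI)
    fix g assume "g \<in> {f \<in> CN. \<forall>x\<in>Nbar. x \<le> q (m - 1) \<longrightarrow> f x = f (q (m - 1))}"
    then show "g \<in> CmM (m - 1)" unfolding CmM_def CN_def by blast
  next
    fix g assume g: "g \<in> CmM (m - 1)"
    then have "g \<in> CN" using CmM_CN by blast
    with g show "g \<in> {f \<in> CN. \<forall>x\<in>Nbar. x \<le> q (m - 1) \<longrightarrow> f x = f (q (m - 1))}"
      unfolding CmM_def by blast
  qed
qed

lemma CmM_tail: "b \<in> CmM M \<Longrightarrow> b (q (M + i)) = b (q M)"
proof -
  assume "b \<in> CmM M"
  then have "\<forall>x\<in>Nbar. x \<le> q M \<longrightarrow> b x = b (q M)" unfolding CmM_def by blast
  moreover have "q (M + i) \<in> Nbar" "q (M + i) \<le> q M" by (simp_all add: q_in q_le_iff)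
  ultimately show ?thesis by blast
qed

lemma tl_CmM: "b \<in> CmM M \<Longrightarrow> tlm M b = b (q M)"
proof -
  assume b: "b \<in> CmM M"
  have "\<And>i. b (q (M + i)) = b (q M)" by (rule CmM_tail[OF b])
  then show ?thesis unfolding tlm_def by (simp only: w_const)
qed

lemma CN_tbound: "f \<in> CN \<Longrightarrow> cmod (f (q j)) \<le> supnorm f"
  by (simp add: le_supnorm q_in)

lemma tl_summable: "f \<in> CN \<Longrightarrow> summable (\<lambda>i. w i * f (q (M + i)))"
  by (rule w_summable) (rule CN_tbound)

definition E0 :: "nat \<Rightarrow> (real \<Rightarrow> complex) \<Rightarrow> (real \<Rightarrow> complex)" where
  "E0 M f = (if f \<in> CN then (\<lambda>x. if x \<notin> Nbar then 0 else if x \<le> q M then tlm M f else f x) else undefined)"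

lemma E0_in: "f \<in> CN \<Longrightarrow> E0 M f \<in> CmM M"
  unfolding CmM_def E0_def by (auto simp: q_in)

lemma E0_id: "b \<in> CmM M \<Longrightarrow> E0 M b = b"
proof (rule ext)
  fix x assume b: "b \<in> CmM M"
  then have "b \<in> CN" using CmM_CN by blast
  have E: "E0 M b x = (if x \<notin> Nbar then 0 else if x \<le> q M then b (q M) else b x)"
    using \<open>b \<in> CN\<close> unfolding E0_def by (simp add: tl_CmM[OF b])
  show "E0 M b x = b x"
  proof (cases "x \<in> Nbar")
    case True
    have "x \<le> q M \<Longrightarrow> b x = b (q M)" using b True unfolding CmM_def by blast
    then show ?thesis using True unfolding E by auto
  next
    case False then have "b x = 0" using b unfolding CmM_def by blast
    then show ?thesis using False unfolding E by auto
  qed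
qed

lemma CN_add: "f \<in> CN \<Longrightarrow> g \<in> CN \<Longrightarrow> (\<lambda>x. f x + g x) \<in> CN"
  unfolding CN_def mem_Collect_eq
  by (intro conjI allI impI continuous_on_add) (elim conjE; simp)+

lemma CN_smult: "f \<in> CN \<Longrightarrow> (\<lambda>x. c * f x) \<in> CN"
  unfolding CN_def mem_Collect_eq
  by (intro conjI allI impI continuous_on_mult continuous_on_const) (elim conjE; simp)+

lemma CN_mult3: "f \<in> CN \<Longrightarrow> g \<in> CN \<Longrightarrow> h \<in> CN \<Longrightarrow> (\<lambda>x. f x * g x * h x) \<in> CN"
  unfolding CN_def mem_Collect_eq
  by (intro conjI allI impI continuous_on_mult) (elim conjE; simp)+

lemma tl_add: "f \<in> CN \<Longrightarrow> g \<in> CN \<Longrightarrow> tlm M (\<lambda>x. f x + g x) = tlm M f + tlm M g"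
  unfolding tlm_def using suminf_add[OF tl_summable[of f M] tl_summable[of g M]]
  by (simp add: distrib_left)

lemma tl_smult: "f \<in> CN \<Longrightarrow> tlm M (\<lambda>x. c * f x) = c * tlm M f"
  unfolding tlm_def using suminf_mult[OF tl_summable[of f M], of c]
  by (simp add: mult_ac)

lemma tl_mult3: "b \<in> CmM M \<Longrightarrow> b' \<in> CmM M \<Longrightarrow> a \<in> CN \<Longrightarrow>
   tlm M (\<lambda>x. b x * a x * b' x) = b (q M) * tlm M a * b' (q M)"
proof -
  assume b: "b \<in> CmM M" and b': "b' \<in> CmM M" and a: "a \<in> CN"
  have "tlm M (\<lambda>x. b x * a x * b' x) = (\<Sum>i. (b (q M) * b' (q M)) * (w i * a (q (M + i))))"
    unfolding tlm_def using CmM_tail[OF b] CmM_tail[OF b'] by (simp add: mult_ac)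
  also have "\<dots> = (b (q M) * b' (q M)) * tlm M a"
    unfolding tlm_def by (rule suminf_mult[OF tl_summable[OF a]])
  finally show ?thesis by (simp add: mult_ac)
qed

lemma tl_norm: "f \<in> CN \<Longrightarrow> cmod (tlm M f) \<le> supnorm f"
  unfolding tlm_def by (rule w_norm_le) (rule CN_tbound)


lemma E0_val: "f \<in> CN \<Longrightarrow> E0 M f x = (if x \<notin> Nbar then 0 else if x \<le> q M then tlm M f else f x)"
  by (simp add: E0_def)

lemma E0_norm: "f \<in> CN \<Longrightarrow> x \<in> Nbar \<Longrightarrow> cmod (E0 M f x) \<le> supnorm f"
  by (simp add: E0_val tl_norm le_supnorm)

lemma E0_supnorm: "f \<in> CN \<Longrightarrow> supnorm (E0 M f) \<le> supnorm f"
  unfolding supnorm_def[of "E0 M f"]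
  apply (rule cSUP_least)
  apply (use zero_in in blast)
  by (rule E0_norm)

lemma E0_add: "f \<in> CN \<Longrightarrow> g \<in> CN \<Longrightarrow> E0 M (\<lambda>x. f x + g x) = (\<lambda>x. E0 M f x + E0 M g x)"
  by (rule ext) (simp add: E0_val CN_add tl_add)

lemma E0_smult: "f \<in> CN \<Longrightarrow> E0 M (\<lambda>x. c * f x) = (\<lambda>x. c * E0 M f x)"
  by (rule ext) (simp add: E0_val CN_smult tl_smult)

lemma CmM_le: "b \<in> CmM M \<Longrightarrow> x \<in> Nbar \<Longrightarrow> x \<le> q M \<Longrightarrow> b x = b (q M)"
  unfolding CmM_def by blast

lemma CmM_out: "b \<in> CmM M \<Longrightarrow> x \<notin> Nbar \<Longrightarrow> b x = 0"
  unfolding CmM_def by blast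

lemma E0_mult3:
  assumes b: "b \<in> CmM M" and b': "b' \<in> CmM M" and a: "a \<in> CN"
  shows "E0 M (\<lambda>x. b x * a x * b' x) = (\<lambda>x. b x * E0 M a x * b' x)"
proof (rule ext)
  fix x
  have bc: "b \<in> CN" "b' \<in> CN" using b b' CmM_CN by blast+
  have m: "(\<lambda>x. b x * a x * b' x) \<in> CN" by (rule CN_mult3[OF bc(1) a bc(2)])
  show "E0 M (\<lambda>x. b x * a x * b' x) x = b x * E0 M a x * b' x"
  proof (cases "x \<in> Nbar \<and> x \<le> q M")
    case True
    then have "b x = b (q M)" "b' x = b' (q M)" using CmM_le[OF b] CmM_le[OF b'] by auto
    then show ?thesis using True unfolding E0_val[OF m] E0_val[OF a] tl_mult3[OF b b' a] by simp
  next
    case False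
    then show ?thesis unfolding E0_val[OF m] E0_val[OF a] by auto
  qed
qed

lemma tau_E0: "f \<in> CN \<Longrightarrow> tau_v (E0 M f) = tau_v f"
proof -
  assume f: "f \<in> CN"
  have s1: "tau_v (E0 M f) = (\<Sum>j<M. w j * E0 M f (q j)) + complex_of_real ((1/2)^M) * tlm M (E0 M f)"
    by (rule tau_split[of _ "supnorm f"]) (rule E0_norm[OF f q_in])
  have s2: "tau_v f = (\<Sum>j<M. w j * f (q j)) + complex_of_real ((1/2)^M) * tlm M f"
    by (rule tau_split[of _ "supnorm f"]) (rule CN_tbound[OF f])
  have "(\<Sum>j<M. w j * E0 M f (q j)) = (\<Sum>j<M. w j * f (q j))"
  proof (rule sum.cong)
    fix j assume "j \<in> {..<M}"
    then have "\<not> q j \<le> q M" by (simp add: q_le_iff)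
    then show "w j * E0 M f (q j) = w j * f (q j)" by (simp add: E0_val[OF f] q_in)
  qed simp
  moreover have "tlm M (E0 M f) = tlm M f"
    using tl_CmM[OF E0_in[OF f]] by (simp add: E0_val[OF f] q_in)
  ultimately show ?thesis using s1 s2 by simp
qed

lemma E0_P: "E0 M \<in> CN \<rightarrow>\<^sub>E CmM M \<and> cond_exp (CmM M) (E0 M) \<and> tau_preserving (E0 M)"
proof (intro conjI)
  show "E0 M \<in> CN \<rightarrow>\<^sub>E CmM M"
    unfolding PiE_iff extensional_def using E0_in by (auto simp: E0_def)
  show "tau_preserving (E0 M)" unfolding tau_preserving_def using tau_E0 by blast
  have img: "E0 M ` CN = CmM M"
  proof
    show "E0 M ` CN \<subseteq> CmM M" using E0_in by blast
    show "CmM M \<subseteq> E0 M ` CN"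
    proof
      fix b assume b: "b \<in> CmM M"
      then have "b = E0 M b" using E0_id by simp
      moreover have "b \<in> CN" using b CmM_CN by blast
      ultimately show "b \<in> E0 M ` CN" by blast
    qed
  qed
  show "cond_exp (CmM M) (E0 M)"
    unfolding cond_exp_def
  proof (intro conjI ballI allI)
    show "E0 M ` CN = CmM M" by (rule img)
  next
    fix f g assume "f \<in> CN" "g \<in> CN" then show "E0 M (\<lambda>x. f x + g x) = (\<lambda>x. E0 M f x + E0 M g x)" by (rule E0_add)
  next
    fix f c assume "f \<in> CN" then show "E0 M (\<lambda>x. c * f x) = (\<lambda>x. c * E0 M f x)" by (rule E0_smult)
  next
    fix b assume "b \<in> CmM M" then show "E0 M b = b" by (rule E0_id)
  next
    fix a assume "a \<in> CN" then show "supnorm (E0 M a) \<le> supnorm a" by (rule E0_supnorm)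
  next
    fix b b' a assume "b \<in> CmM M" "b' \<in> CmM M" "a \<in> CN"
    then show "E0 M (\<lambda>x. b x * a x * b' x) = (\<lambda>x. b x * E0 M a x * b' x)" by (rule E0_mult3)
  qed
qed

lemma uniq:
  assumes P: "E \<in> CN \<rightarrow>\<^sub>E CmM M" "cond_exp (CmM M) E" "tau_preserving E"
  shows "E = E0 M"
proof (rule ext)
  fix f
  show "E f = E0 M f"
  proof (cases "f \<in> CN")
    case False
    then have "E f = undefined" using P(1) by (metis PiE_arb)
    then show ?thesis using False by (simp add: E0_def)
  next
    case f: True
    have Ef: "E f \<in> CmM M" using P(1) f by (rule PiE_mem)
    have EfC: "E f \<in> CN" using Ef CmM_CN by blast
    have idem0: "\<forall>b\<in>CmM M. E b = b" using P(2) unfolding cond_exp_def by (elim conjE) assumption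
    have bim0: "\<forall>b\<in>CmM M. \<forall>b'\<in>CmM M. \<forall>a\<in>CN. E (\<lambda>x. b x * a x * b' x) = (\<lambda>x. b x * E a x * b' x)"
      using P(2) unfolding cond_exp_def by (elim conjE) assumption
    have idem: "\<And>b. b \<in> CmM M \<Longrightarrow> E b = b" using idem0 by (rule bspec)
    have bim: "\<And>b b' a. b \<in> CmM M \<Longrightarrow> b' \<in> CmM M \<Longrightarrow> a \<in> CN \<Longrightarrow>
        E (\<lambda>x. b x * a x * b' x) = (\<lambda>x. b x * E a x * b' x)"
      using bim0 by simp
    have step1: "E f (q j) = f (q j)" if j: "j < M" for j
    proof -
      define \<delta> where "\<delta> = (\<lambda>x::real. if x = q j then (1::complex) else 0)"
      define one where "one = (\<lambda>x::real. if x \<in> Nbar then (1::complex) else 0)"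
      have qjM: "\<not> q j \<le> q M" using j by (simp add: q_le_iff)
      have d: "\<delta> \<in> CmM M" unfolding CmM_def \<delta>_def
      proof (intro CollectI conjI allI impI ballI)
        fix x assume "x \<notin> Nbar" then show "(if x = q j then 1 else 0) = (0::complex)" using q_in[of j] by auto
      next
        fix x assume "x \<in> Nbar" "x \<le> q M"
        then show "(if x = q j then 1 else 0) = (if q M = q j then 1 else (0::complex))" using qjM by auto
      qed
      have o: "one \<in> CmM M" unfolding CmM_def one_def using q_in[of M] by auto
      have p: "(\<lambda>x. \<delta> x * f x * one x) = (\<lambda>x. f (q j) * \<delta> x)"
        by (rule ext) (simp add: \<delta>_def one_def q_in)
      have pC: "(\<lambda>x. f (q j) * \<delta> x) \<in> CmM M"
        unfolding CmM_def
      proof (intro CollectI conjI allI impI ballI)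
        fix x assume "x \<notin> Nbar" then show "f (q j) * \<delta> x = 0" using CmM_out[OF d] by simp
      next
        fix x assume "x \<in> Nbar" "x \<le> q M"
        then have "\<delta> x = \<delta> (q M)" by (rule CmM_le[OF d])
        then show "f (q j) * \<delta> x = f (q j) * \<delta> (q M)" by simp
      qed
      have "(\<lambda>x. \<delta> x * E f x * one x) = E (\<lambda>x. \<delta> x * f x * one x)"
        using bim[OF d o f] by simp
      also have "\<dots> = (\<lambda>x. \<delta> x * f x * one x)" unfolding p by (rule idem[OF pC])
      finally have "\<delta> (q j) * E f (q j) * one (q j) = \<delta> (q j) * f (q j) * one (q j)" by metis
      then show ?thesis by (simp add: \<delta>_def one_def q_in)
    qed
    have step2: "E f (q M) = tlm M f"
    proof -
      have s1: "tau_v (E f) = (\<Sum>j<M. w j * E f (q j)) + complex_of_real ((1/2)^M) * tlm M (E f)"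
        by (rule tau_split[of _ "supnorm (E f)"]) (rule CN_tbound[OF EfC])
      have s2: "tau_v f = (\<Sum>j<M. w j * f (q j)) + complex_of_real ((1/2)^M) * tlm M f"
        by (rule tau_split[of _ "supnorm f"]) (rule CN_tbound[OF f])
      have "(\<Sum>j<M. w j * E f (q j)) = (\<Sum>j<M. w j * f (q j))"
        by (rule sum.cong) (simp_all add: step1)
      moreover have "tau_v (E f) = tau_v f" using P(3) f unfolding tau_preserving_def by blast
      ultimately have "complex_of_real ((1/2)^M) * tlm M (E f) = complex_of_real ((1/2)^M) * tlm M f"
        using s1 s2 by simp
      then have "tlm M (E f) = tlm M f" by simp
      then show ?thesis using tl_CmM[OF Ef] by simp
    qed
    show ?thesis
    proof (rule ext)
      fix x
      show "E f x = E0 M f x"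
      proof (cases "x \<in> Nbar")
        case False then show ?thesis using CmM_out[OF Ef False] by (simp add: E0_val[OF f])
      next
        case True
        show ?thesis
        proof (cases "x \<le> q M")
          case le: True
          then show ?thesis using CmM_le[OF Ef True le] step2 True by (simp add: E0_val[OF f])
        next
          case gt: False
          then have "q M < x" by simp
          then obtain j where "j < M" "x = q j" using Nbar_gt[OF True] by blast
          then show ?thesis using step1 gt True by (simp add: E0_val[OF f])
        qed
      qed
    qed
  qed
qed

lemma Em_eq: "m \<ge> 1 \<Longrightarrow> Em m = E0 (m - 1)"
  unfolding Em_def Cm_eq
  by (rule the_equality) (use E0_P uniq in blast)+


lemma pt_pos: "n \<ge> 1 \<Longrightarrow> pt n > 0" by (simp add: pt_q q_pos)

lemma phi_out: "x \<notin> Nbar \<Longrightarrow> phi n x = 0" by (simp add: phi_def)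

lemma phi_0: "n \<ge> 1 \<Longrightarrow> phi n 0 = 1"
  using pt_pos[of n] by (simp add: phi_def zero_in)

lemma phi_q: "n \<ge> 1 \<Longrightarrow> phi n (q j) = (if j < n - 1 then 0 else if j = n - 1 then -1 else 1)"
  by (simp add: phi_def q_in pt_q q_less_iff q_eq_iff)

lemma phi_le1: "n \<ge> 1 \<Longrightarrow> cmod (phi n x) \<le> 1"
  by (simp add: phi_def)

lemma phi_CmM: assumes n: "n \<ge> 1" and K: "K \<ge> n" shows "phi n \<in> CmM K"
  unfolding CmM_def
proof (intro CollectI conjI allI impI ballI)
  fix x assume "x \<notin> Nbar" then show "phi n x = 0" by (rule phi_out)
next
  fix x assume x: "x \<in> Nbar" "x \<le> q K"
  have "phi n (q K) = 1" using n K by (auto simp: phi_q)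
  moreover have "phi n x = 1"
  proof (rule Nbar_cases[OF x(1)])
    assume "x = 0" then show ?thesis using phi_0[OF n] by simp
  next
    fix j assume "x = q j"
    then have "j \<ge> K" using x(2) by (simp add: q_le_iff)
    then show ?thesis using \<open>x = q j\<close> n K by (auto simp: phi_q)
  qed
  ultimately show "phi n x = phi n (q K)" by simp
qed

lemma phi_CN: "n \<ge> 1 \<Longrightarrow> phi n \<in> CN"
  using phi_CmM[of n n] CmM_CN by blast

lemma supnorm_zero: "supnorm (\<lambda>x. 0) = 0"
proof -
  have "Nbar \<noteq> {}" using zero_in by blast
  then show ?thesis unfolding supnorm_def by (simp add: cSUP_const)
qed

lemma supnorm_phi: assumes n: "n \<ge> 1" shows "supnorm (phi n) = 1"
proof (rule antisym)
  show "supnorm (phi n) \<le> 1" unfolding supnorm_def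
    by (rule cSUP_least) (use zero_in phi_le1[OF n] in auto)
  show "1 \<le> supnorm (phi n)" using le_supnorm[OF phi_CN[OF n] zero_in] phi_0[OF n] by simp
qed

lemma tl_phi: assumes n: "n \<ge> 1" and M: "M \<le> n - 1" shows "tlm M (phi n) = 0"
proof -
  define D where "D = n - 1 - M"
  define g where "g i = w i * phi n (q (M + i))" for i
  have gv: "g i = (if i < D then 0 else if i = D then - w D else w i)" for i
    unfolding g_def D_def using n M by (auto simp: phi_q)
  have sm: "summable g" unfolding g_def by (rule tl_summable[OF phi_CN[OF n]])
  have "tlm M (phi n) = suminf g" unfolding tlm_def g_def ..
  also have "\<dots> = (\<Sum>i. g (i + Suc D)) + (\<Sum>i<Suc D. g i)"
    by (rule suminf_split_initial_segment[OF sm])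
  also have "(\<Sum>i. g (i + Suc D)) = (\<Sum>i. complex_of_real ((1/2) ^ Suc D) * w i)"
  proof -
    have "g (i + Suc D) = complex_of_real ((1/2) ^ Suc D) * w i" for i
    proof -
      have "g (i + Suc D) = w (i + Suc D)" by (simp add: gv)
      also have "\<dots> = complex_of_real ((1/2) ^ Suc D) * w i"
      proof -
        have e: "Suc (i + Suc D) = Suc D + Suc i" by simp
        show ?thesis unfolding w_def e power_add of_real_mult ..
      qed
      finally show ?thesis .
    qed
    then show ?thesis by (simp only:)
  qed
  also have "\<dots> = complex_of_real ((1/2) ^ Suc D)"
    using sums_unique[OF sums_mult[OF w_sums, of "complex_of_real ((1/2) ^ Suc D)"]] by simp
  also have "(\<Sum>i<Suc D. g i) = - w D"
    by (simp add: gv)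
  finally show ?thesis by (simp add: w_def)
qed

lemma E0_phi_zero: assumes n: "n \<ge> 1" and M: "M \<le> n - 1" shows "E0 M (phi n) = (\<lambda>x. 0)"
proof (rule ext)
  fix x
  show "E0 M (phi n) x = 0"
  proof (cases "x \<in> Nbar \<and> \<not> x \<le> q M")
    case True
    then have "q M < x" by simp
    then obtain j where j: "j < M" "x = q j" using Nbar_gt True by blast
    then show ?thesis using True n M by (simp add: E0_val[OF phi_CN[OF n]] phi_q)
  next
    case False then show ?thesis using tl_phi[OF n M] by (auto simp: E0_val[OF phi_CN[OF n]])
  qed
qed

lemma ratio: assumes n: "n \<ge> 1" and m: "m \<ge> 1"
  shows "supnorm (\<lambda>x. phi n x - Em m (phi n) x) = (if m \<le> n then 1 else 0)"
proof (cases "m \<le> n")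
  case True
  then have "m - 1 \<le> n - 1" by simp
  then show ?thesis using True by (simp add: Em_eq[OF m] E0_phi_zero[OF n] supnorm_phi[OF n])
next
  case False
  then have "phi n \<in> CmM (m - 1)" using n by (intro phi_CmM) auto
  then show ?thesis using False by (simp add: Em_eq[OF m] E0_id supnorm_zero)
qed

theorem lemma3p8:
  fixes \<beta> :: "nat \<Rightarrow> real" and n :: nat
  assumes pos: "\<And>k. k \<ge> 1 \<Longrightarrow> \<beta> k > 0"
    and noninc: "\<And>k l. 1 \<le> k \<Longrightarrow> k \<le> l \<Longrightarrow> \<beta> l \<le> \<beta> k"
    and lim: "\<beta> \<longlonglongrightarrow> 0"
    and n: "n \<ge> 1"
  shows "L_beta \<beta> (phi n) = 1 / \<beta> n"
  unfolding L_beta_def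
proof (rule cSup_eq_maximum)
  show "1 / \<beta> n \<in> (\<lambda>m. supnorm (\<lambda>x. phi n x - Em m (phi n) x) / \<beta> m) ` {1..}"
    using n by (intro image_eqI[of _ _ n]) (simp_all add: ratio)
next
  fix y assume "y \<in> (\<lambda>m. supnorm (\<lambda>x. phi n x - Em m (phi n) x) / \<beta> m) ` {1..}"
  then obtain m where m: "m \<in> {1::nat..}" and y: "y = supnorm (\<lambda>x. phi n x - Em m (phi n) x) / \<beta> m" by blast
  from m have m1: "m \<ge> 1" by simp
  show "y \<le> 1 / \<beta> n"
  proof (cases "m \<le> n")
    case True
    have "\<beta> n \<le> \<beta> m" by (rule noninc[OF m1 True])
    then have "1 / \<beta> m \<le> 1 / \<beta> n" using pos[OF n] by (intro divide_left_mono) auto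
    then show ?thesis using True by (simp add: y ratio[OF n m1])
  next
    case False
    then show ?thesis using pos[OF n] by (simp add: y ratio[OF n m1])
  qed
qed

end
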